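(* For $0<a_-<a_+<1$, $$\int\log x\ \pi_{a_-,a_+}(dx)=\frac{\sigma_+\log\sigma_++\sigma_-\log\sigma_--(\sigma_++\sigma_--1)\log(\sigma_++\sigma_--1)}{1-\sigma_+},$$ where $\sigma_\pm=\sigma_\pm(a_-,a_+)$.
   Context: For $(b,c)\in(0,1)^2$, $\sigma_\pm(b,c)=\frac12\big[1+\sqrt{bc}\pm\sqrt{(1-b)(1-c)}\big]$. For $0<a_-<a_+<1$, $\pi_{a_-,a_+}(dx)=C_{a_-,a_+}\frac{\sqrt{(x-a_-)(a_+-x)}}{2\pi x(1-x)}\mathbf 1_{[a_-,a_+]}(x)dx$ (generalized McKay distribution), with normalization $C_{a_-,a_+}^{-1}=\frac12\big[1-\sqrt{a_-a_+}-\sqrt{(1-a_-)(1-a_+)}\big]$. *)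

theory Defs
  imports "HOL-Probability.Probability"
begin

definition sigma_plus :: "real \<Rightarrow> real \<Rightarrow> real" where
  "sigma_plus b c = (1 + sqrt (b * c) + sqrt ((1 - b) * (1 - c))) / 2"

definition sigma_minus :: "real \<Rightarrow> real \<Rightarrow> real" where
  "sigma_minus b c = (1 + sqrt (b * c) - sqrt ((1 - b) * (1 - c))) / 2"

definition mckay_const :: "real \<Rightarrow> real \<Rightarrow> real" where
  "mckay_const am ap = 1 / ((1 - sqrt (am * ap) - sqrt ((1 - am) * (1 - ap))) / 2)"

definition mckay_density :: "real \<Rightarrow> real \<Rightarrow> real \<Rightarrow> real" where
  "mckay_density am ap x =
     mckay_const am ap * sqrt ((x - am) * (ap - x)) / (2 * pi * x * (1 - x))
     * indicator {am..ap} x"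

definition mckay :: "real \<Rightarrow> real \<Rightarrow> real measure" where
  "mckay am ap = density lborel (\<lambda>x. ennreal (mckay_density am ap x))"

end

theory Submission
  imports Defs
begin


lemma d_arcsin1:
  fixes a b x :: real
  assumes "a < x" "x < b"
  shows "((\<lambda>x. arcsin((2*x-a-b)/(b-a))) has_real_derivative 1/sqrt((x-a)*(b-x))) (at x)"
proof -
  define y where "y = (2*x-a-b)/(b-a)"
  define s where "s = sqrt((x-a)*(b-x))"
  have s: "s > 0" using assms by (simp add: s_def)
  have s2: "s^2 = (x-a)*(b-x)" using assms by (simp add: s_def)
  have e: "1 - y^2 = (2 * s /(b-a))^2" using assms s2
    by (simp add: y_def power_divide field_simps) (simp add: power2_eq_square algebra_simps)
  have q: "sqrt(1-y^2) = 2 * s /(b-a)" using e s assms by simp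
  have "y^2 < 1" using e s assms by (smt (verit) divide_pos_pos zero_less_power)
  then have "\<bar>y\<bar> < 1" by (simp add: abs_square_less_1)
  then have yb: "-1 < y" "y < 1" by auto
  have "((\<lambda>x. arcsin((2*x-a-b)/(b-a))) has_real_derivative inverse(sqrt(1-y^2)) * (2/(b-a))) (at x)"
    unfolding y_def
    apply (rule DERIV_chain2[OF DERIV_arcsin])
    using yb assms by (auto simp: y_def intro!: derivative_eq_intros) (simp add: divide_simps)
  moreover have "inverse(sqrt(1-y^2)) * (2/(b-a)) = 1/s"
    using q s assms by (simp add: divide_simps)
  ultimately show ?thesis by (simp add: s_def)
qed

lemma d_arcsin2:
  fixes a b p x :: real
  assumes "p < a" "a < x" "x < b"
  shows "((\<lambda>x. arcsin((2*(a-p)*(b-p)/(x-p) - (a+b-2*p))/(b-a))) has_real_derivative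
          - sqrt((a-p)*(b-p))/((x-p)* sqrt((x-a)*(b-x)))) (at x)"
proof -
  define y where "y = (2*(a-p)*(b-p)/(x-p) - (a+b-2*p))/(b-a)"
  define s where "s = sqrt((x-a)*(b-x))"
  define q where "q = sqrt((a-p)*(b-p))"
  have s: "s > 0" using assms by (simp add: s_def)
  have s2: "s^2 = (x-a)*(b-x)" using assms by (simp add: s_def)
  have q: "q > 0" using assms by (simp add: q_def)
  have q2: "q^2 = (a-p)*(b-p)" using assms by (simp add: q_def)
  have xp: "x - p > 0" "b - a > 0" using assms by auto
  have e: "1 - y^2 = (2 * q * s / ((x-p)*(b-a)))^2"
  proof -
    define N where "N = 2*(a-p)*(b-p) - (a+b-2*p)*(x-p)"
    define D where "D = (x-p)*(b-a)"
    have D: "D \<noteq> 0" using xp by (simp add: D_def)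
    have yN: "y = N/D" using xp by (simp add: y_def N_def D_def field_simps)
    have "1 - y^2 = (D^2 - N^2)/D^2" unfolding yN using D by (simp add: power_divide field_simps)
    also have "... = ((b-a)^2*(x-p)^2 - (2*(a-p)*(b-p) - (a+b-2*p)*(x-p))^2)/((x-p)^2*(b-a)^2)"
      by (simp add: N_def D_def power_mult_distrib mult.commute)
    also have "... = (4*q^2* s^2)/((x-p)^2*(b-a)^2)"
      unfolding q2 s2 by (rule arg_cong[where f="\<lambda>u. u/_"]) (simp add: power2_eq_square algebra_simps)
    also have "... = (2 * q * s / ((x-p)*(b-a)))^2"
      by (simp add: power_divide power_mult_distrib)
    finally show ?thesis .
  qed
  have qq: "sqrt(1-y^2) = 2 * q * s / ((x-p)*(b-a))" using e s q xp by simp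
  have "y^2 < 1" using e s q xp by (smt (verit) divide_pos_pos mult_pos_pos zero_less_power)
  then have "\<bar>y\<bar> < 1" by (simp add: abs_square_less_1)
  then have yb: "-1 < y" "y < 1" by auto
  have "((\<lambda>x. arcsin((2*(a-p)*(b-p)/(x-p) - (a+b-2*p))/(b-a))) has_real_derivative
      inverse(sqrt(1-y^2)) * ((- (2*(a-p)*(b-p)) / (x-p)^2)/(b-a))) (at x)"
    unfolding y_def
    apply (rule DERIV_chain2[OF DERIV_arcsin])
    using yb xp by (auto simp: y_def intro!: derivative_eq_intros) (simp add: divide_simps power2_eq_square)
  moreover have "inverse(sqrt(1-y^2)) * ((- (2*(a-p)*(b-p)) / (x-p)^2)/(b-a)) = - q/((x-p)* s)"
  proof -
    have h: "2*(a-p)*(b-p) = 2*q^2" using q2 by simp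
    show ?thesis unfolding qq h using s q xp by (simp add: divide_simps power2_eq_square)
  qed
  ultimately show ?thesis by (simp add: s_def q_def)
qed

lemma d_sqrt:
  fixes a b x :: real
  assumes "a < x" "x < b"
  shows "((\<lambda>x. sqrt((x-a)*(b-x))) has_real_derivative (a+b-2*x)/(2* sqrt((x-a)*(b-x)))) (at x)"
proof -
  have pos: "0 < (x-a)*(b-x)" using assms by simp
  show ?thesis using pos
    by (auto intro!: derivative_eq_intros simp: divide_simps)
qed

lemma stieltjes:
  fixes a b p :: real
  assumes ap: "p < a" and ab: "a < b"
  shows "((\<lambda>x. sqrt((x-a)*(b-x))/(x-p)) has_integral pi*((a+b)/2 - p - sqrt((a-p)*(b-p)))) {a..b}"
proof -
  define q where "q = sqrt((a-p)*(b-p))"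
  define P where "P x = sqrt((x-a)*(b-x)) + ((a+b)/2 - p) * arcsin((2*x-a-b)/(b-a))
     + q * arcsin((2*(a-p)*(b-p)/(x-p) - (a+b-2*p))/(b-a))" for x
  have q2: "q^2 = (a-p)*(b-p)" using assms by (simp add: q_def)
  have b1: "-1 \<le> (2*x-a-b)/(b-a) \<and> (2*x-a-b)/(b-a) \<le> 1" if "x \<in> {a..b}" for x
    using that ab by (auto simp: divide_simps)
  have b2: "-1 \<le> (2*(a-p)*(b-p)/(x-p) - (a+b-2*p))/(b-a) \<and> (2*(a-p)*(b-p)/(x-p) - (a+b-2*p))/(b-a) \<le> 1"
    if "x \<in> {a..b}" for x
  proof -
    have x: "a \<le> x" "x \<le> b" using that by auto
    have "2*(a-p)*(b-p) \<le> 2*(x-p)*(b-p)" using x ap ab by (intro mult_right_mono mult_left_mono) auto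
    moreover have "2*(x-p)*(a-p) \<le> 2*(b-p)*(a-p)" using x ap ab by (intro mult_right_mono mult_left_mono) auto
    ultimately show ?thesis using x ap ab by (auto simp: divide_simps algebra_simps)
  qed
  have cont: "continuous_on {a..b} P"
    unfolding P_def using b1 b2 ap ab by (auto intro!: continuous_intros)
  have der: "(P has_real_derivative sqrt((x-a)*(b-x))/(x-p)) (at x)" if "x \<in> {a<..<b}" for x
  proof -
    have x: "a < x" "x < b" using that by auto
    define s where "s = sqrt((x-a)*(b-x))"
    have s: "s > 0" using x by (simp add: s_def)
    have s2: "s^2 = (x-a)*(b-x)" using x by (simp add: s_def)
    have "(P has_real_derivative (a+b-2*x)/(2* s) + ((a+b)/2 - p) * (1/s) + q * (- q/((x-p)* s))) (at x)"
      unfolding P_def s_def q_def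
      by (intro DERIV_add DERIV_cmult d_sqrt d_arcsin1 d_arcsin2 x ap)
    moreover have "(a+b-2*x)/(2* s) + ((a+b)/2 - p) * (1/s) + q * (- q/((x-p)* s)) = s/(x-p)"
    proof -
      have "x - p > 0" using x ap by auto
      then show ?thesis using s
        apply (simp add: divide_simps)
        apply (simp add: power2_eq_square[symmetric] q2 s2)
        using s2 unfolding power2_eq_square by algebra
    qed
    ultimately show ?thesis by (simp add: s_def)
  qed
  have "((\<lambda>x. sqrt((x-a)*(b-x))/(x-p)) has_integral (P b - P a)) {a..b}"
    apply (rule fundamental_theorem_of_calculus_interior)
    using ab cont der by (auto simp: has_real_derivative_iff_has_vector_derivative[symmetric])
  moreover have "P b - P a = pi*((a+b)/2 - p - q)"
  proof -
    have e1: "(2*(a-p)*(b-p)/(b-p) - (a+b-2*p))/(b-a) = -1" using ab ap by (simp add: divide_simps)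
    have e2: "(2*(a-p)*(b-p)/(a-p) - (a+b-2*p))/(b-a) = 1" using ab ap by (simp add: divide_simps) (simp add: algebra_simps)
    have e3: "(2*b-a-b)/(b-a) = 1" "(2*a-a-b)/(b-a) = -1" using ab by (simp_all add: divide_simps)
    show ?thesis unfolding P_def e1 e2 e3 by (simp add: algebra_simps)
  qed
  ultimately show ?thesis by (simp add: q_def)
qed



definition RR :: "real \<Rightarrow> real \<Rightarrow> real \<Rightarrow> real" where
  "RR a b t = sqrt((1-t+t*a)*(1-t+t*b))"

definition A1 where "A1 a b t = 2 * RR a b t + 2 - (2-a-b)*t"
definition A2 where "A2 a b t = (2-a-b) - 2*(1-a)*(1-b)*t - 2 * sqrt((1-a)*(1-b)) * RR a b t"
definition A3 where "A3 a b t = 2 * sqrt(a*b) * RR a b t + (a+b-2*a*b)*(1-t) + 2*a*b"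
definition A4 where "A4 a b t = 2 * sqrt((1-a)*(1-b)) * RR a b t + 2*(1-a)*(1-b)*(1-t) + (a+b-2*a*b)"

definition FF :: "real \<Rightarrow> real \<Rightarrow> real \<Rightarrow> real" where
  "FF a b t = ln (A1 a b t) + ((2-a-b)/(2 * sqrt((1-a)*(1-b)))) * ln (A2 a b t)
     - sqrt(a*b) * ln (A3 a b t) + ((a+b-2*a*b)/(2 * sqrt((1-a)*(1-b)))) * ln (A4 a b t)"

context
  fixes a b :: real
  assumes a0: "0 < a" and ab: "a < b" and b1: "b < 1"
begin

lemma lin_pos: "(t::real) \<in> {0..1} \<Longrightarrow> 0 < c \<Longrightarrow> c < 1 \<Longrightarrow> 0 < 1-t+t*c"
proof -
  assume t: "t \<in> {0..1}" and c: "0 < c" "c < 1"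
  have "t*(1-c) \<le> 1*(1-c)" using t c by (intro mult_right_mono) auto
  then show ?thesis using c by (simp add: algebra_simps)
qed

lemma Q_pos: "t \<in> {0..1} \<Longrightarrow> 0 < (1-t+t*a)*(1-t+t*b)"
  using lin_pos[of t a] lin_pos[of t b] a0 ab b1 by simp

abbreviation "g \<equiv> sqrt(a*b)"
abbreviation "h \<equiv> sqrt((1-a)*(1-b))"
abbreviation "Qd t \<equiv> (a-1)*(1-t+t*b) + (1-t+t*a)*(b-1)"

lemma g_pos: "g > 0" and g2: "g^2 = a*b" and h_pos: "h > 0" and h2: "h^2 = (1-a)*(1-b)"
  using a0 ab b1 by (auto intro: mult_pos_pos)

lemma R_pos: "t \<in> {0..1} \<Longrightarrow> RR a b t > 0"
  using Q_pos by (simp add: RR_def)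

lemma R2: "t \<in> {0..1} \<Longrightarrow> (RR a b t)^2 = (1-t+t*a)*(1-t+t*b)"
  using Q_pos by (simp add: RR_def less_imp_le)

lemma dR: "t \<in> {0..1} \<Longrightarrow> ((\<lambda>t. RR a b t) has_real_derivative Qd t / (2 * RR a b t)) (at t)"
  using Q_pos[of t] unfolding RR_def
  by (auto intro!: derivative_eq_intros simp: divide_simps)

lemma A1_pos: "t \<in> {0..1} \<Longrightarrow> A1 a b t > 0"
proof -
  assume t: "t \<in> {0..1}"
  have "(2-a-b)*t \<le> (2-a-b)" using mult_left_mono[of t 1 "2-a-b"] t a0 ab b1 by simp
  then show ?thesis using R_pos[OF t] a0 ab b1 unfolding A1_def by linarith
qed

lemma A3_pos: "t \<in> {0..1} \<Longrightarrow> A3 a b t > 0"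
proof -
  assume t: "t \<in> {0..1}"
  have "a*b < a" "a*b < b" using a0 ab b1 by auto
  then have "0 \<le> (a+b-2*a*b)*(1-t)" using t by (intro mult_nonneg_nonneg) auto
  then show ?thesis using R_pos[OF t] g_pos a0 ab b1 by (simp add: A3_def add_pos_nonneg)
qed

lemma A4_pos: "t \<in> {0..1} \<Longrightarrow> A4 a b t > 0"
proof -
  assume t: "t \<in> {0..1}"
  have "a*b < a" "a*b < b" using a0 ab b1 by auto
  moreover have "0 \<le> 2*(1-a)*(1-b)*(1-t)" using t a0 ab b1 by (intro mult_nonneg_nonneg) auto
  moreover have "0 < 2*h*RR a b t" using R_pos[OF t] h_pos by simp
  ultimately show ?thesis unfolding A4_def by linarith
qed

lemma A2_pos: "t \<in> {0..1} \<Longrightarrow> A2 a b t > 0"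
proof -
  assume t: "t \<in> {0..1}"
  define X where "X = (2-a-b) - 2*(1-a)*(1-b)*t"
  have "(1-a)*(1-b)*t \<le> (1-a)*(1-b)" using mult_left_mono[of t 1 "(1-a)*(1-b)"] t a0 ab b1 by simp
  moreover have "(1-a)*(1-b) < 1-a" "(1-a)*(1-b) < 1-b" using a0 ab b1 by auto
  ultimately have X: "X > 0" unfolding X_def by linarith
  have "X^2 - (2*h*RR a b t)^2 = (b-a)^2"
    unfolding power_mult_distrib h2 R2[OF t] using a0 b1 ab
    by (simp add: X_def power2_eq_square algebra_simps)
  moreover have "(b-a)^2 > 0" using ab by simp
  ultimately have "(2*h*RR a b t)^2 < X^2" by linarith
  then have "2*h*RR a b t < X" using X by (smt (verit) power_mono)
  then show ?thesis by (simp add: A2_def X_def)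
qed

lemma dlnA1: assumes t: "t \<in> {0<..<1}"
  shows "((\<lambda>t. ln (A1 a b t)) has_real_derivative (1/t - 1/(t * RR a b t))) (at t)"
proof -
  have t01: "t \<in> {0..1}" using t by auto
  have d: "((\<lambda>t. A1 a b t) has_real_derivative 2*(Qd t/(2*RR a b t)) - (2-a-b)) (at t)"
    unfolding A1_def by (auto intro!: derivative_eq_intros dR[OF t01])
  have d2: "((\<lambda>t. ln (A1 a b t)) has_real_derivative (1/A1 a b t) * (2*(Qd t/(2*RR a b t)) - (2-a-b))) (at t)"
    by (rule DERIV_chain2[OF DERIV_ln_divide[OF A1_pos[OF t01]] d])
  have "(1/A1 a b t) * (2*(Qd t/(2*RR a b t)) - (2-a-b)) = 1/t - 1/(t * RR a b t)"
  proof -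
    have "A1 a b t \<noteq> 0" "RR a b t \<noteq> 0" "t \<noteq> 0" using A1_pos[OF t01] R_pos[OF t01] t by auto
    then show ?thesis
      apply (simp add: field_simps)
      apply (simp add: A1_def)
      using R2[OF t01] by algebra
  qed
  then show ?thesis using d2 by simp
qed

lemma dlnA2: assumes t: "t \<in> {0<..<1}"
  shows "((\<lambda>t. ln (A2 a b t)) has_real_derivative (h / RR a b t)) (at t)"
proof -
  have t01: "t \<in> {0..1}" using t by auto
  have d: "((\<lambda>t. A2 a b t) has_real_derivative - (2*(1-a)*(1-b)) - 2*h*(Qd t/(2*RR a b t))) (at t)"
    unfolding A2_def by (auto intro!: derivative_eq_intros dR[OF t01])
  have d2: "((\<lambda>t. ln (A2 a b t)) has_real_derivative (1/A2 a b t) * (- (2*(1-a)*(1-b)) - 2*h*(Qd t/(2*RR a b t)))) (at t)"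
    by (rule DERIV_chain2[OF DERIV_ln_divide[OF A2_pos[OF t01]] d])
  have key: "\<And>R G H A. R \<noteq> 0 \<Longrightarrow> A \<noteq> 0 \<Longrightarrow> t \<noteq> 0 \<Longrightarrow> 1 - t \<noteq> 0 \<Longrightarrow> A = (2-a-b) - 2*(1-a)*(1-b)*t - 2 * H * R \<Longrightarrow>
     R^2 = (1-t+t*a)*(1-t+t*b) \<Longrightarrow> G^2 = a*b \<Longrightarrow> H^2 = (1-a)*(1-b) \<Longrightarrow> (1/A) * (- (2*(1-a)*(1-b)) - 2*H*(Qd t/(2*R))) = H / R"
  proof -
    fix R G H A :: real
    assume h: "R \<noteq> 0" "A \<noteq> 0" "t \<noteq> 0" "1 - t \<noteq> 0" "A = (2-a-b) - 2*(1-a)*(1-b)*t - 2 * H * R"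
      "R^2 = (1-t+t*a)*(1-t+t*b)" "G^2 = a*b" "H^2 = (1-a)*(1-b)"
    then show "(1/A) * (- (2*(1-a)*(1-b)) - 2*H*(Qd t/(2*R))) = H / R"
      apply (simp add: field_simps)
      by algebra
  qed
  have "(1/A2 a b t) * (- (2*(1-a)*(1-b)) - 2*h*(Qd t/(2*RR a b t))) = h / RR a b t"
    apply (rule key[where G=g and H=h])
    using A2_pos[OF t01] R_pos[OF t01] t R2[OF t01] g2 h2 by (auto simp: A2_def)
  then show ?thesis using d2 by simp
qed

lemma dlnA3: assumes t: "t \<in> {0<..<1}"
  shows "((\<lambda>t. ln (A3 a b t)) has_real_derivative ((g - RR a b t)/((1-t) * RR a b t))) (at t)"
proof -
  have t01: "t \<in> {0..1}" using t by auto
  have d: "((\<lambda>t. A3 a b t) has_real_derivative 2*g*(Qd t/(2*RR a b t)) - (a+b-2*a*b)) (at t)"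
    unfolding A3_def by (auto intro!: derivative_eq_intros dR[OF t01])
  have d2: "((\<lambda>t. ln (A3 a b t)) has_real_derivative (1/A3 a b t) * (2*g*(Qd t/(2*RR a b t)) - (a+b-2*a*b))) (at t)"
    by (rule DERIV_chain2[OF DERIV_ln_divide[OF A3_pos[OF t01]] d])
  have key: "\<And>R G H A. R \<noteq> 0 \<Longrightarrow> A \<noteq> 0 \<Longrightarrow> t \<noteq> 0 \<Longrightarrow> 1 - t \<noteq> 0 \<Longrightarrow> A = 2 * G * R + (a+b-2*a*b)*(1-t) + 2*a*b \<Longrightarrow>
     R^2 = (1-t+t*a)*(1-t+t*b) \<Longrightarrow> G^2 = a*b \<Longrightarrow> H^2 = (1-a)*(1-b) \<Longrightarrow> (1/A) * (2*G*(Qd t/(2*R)) - (a+b-2*a*b)) = (G - R)/((1-t) * R)"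
  proof -
    fix R G H A :: real
    assume h: "R \<noteq> 0" "A \<noteq> 0" "t \<noteq> 0" "1 - t \<noteq> 0" "A = 2 * G * R + (a+b-2*a*b)*(1-t) + 2*a*b"
      "R^2 = (1-t+t*a)*(1-t+t*b)" "G^2 = a*b" "H^2 = (1-a)*(1-b)"
    then show "(1/A) * (2*G*(Qd t/(2*R)) - (a+b-2*a*b)) = (G - R)/((1-t) * R)"
      apply (simp add: field_simps)
      by algebra
  qed
  have "(1/A3 a b t) * (2*g*(Qd t/(2*RR a b t)) - (a+b-2*a*b)) = (g - RR a b t)/((1-t) * RR a b t)"
    apply (rule key[where G=g and H=h])
    using A3_pos[OF t01] R_pos[OF t01] t R2[OF t01] g2 h2 by (auto simp: A3_def)
  then show ?thesis using d2 by simp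
qed

lemma dlnA4: assumes t: "t \<in> {0<..<1}"
  shows "((\<lambda>t. ln (A4 a b t)) has_real_derivative (- h / RR a b t)) (at t)"
proof -
  have t01: "t \<in> {0..1}" using t by auto
  have d: "((\<lambda>t. A4 a b t) has_real_derivative 2*h*(Qd t/(2*RR a b t)) - 2*(1-a)*(1-b)) (at t)"
    unfolding A4_def by (auto intro!: derivative_eq_intros dR[OF t01])
  have d2: "((\<lambda>t. ln (A4 a b t)) has_real_derivative (1/A4 a b t) * (2*h*(Qd t/(2*RR a b t)) - 2*(1-a)*(1-b))) (at t)"
    by (rule DERIV_chain2[OF DERIV_ln_divide[OF A4_pos[OF t01]] d])
  have key: "\<And>R G H A. R \<noteq> 0 \<Longrightarrow> A \<noteq> 0 \<Longrightarrow> t \<noteq> 0 \<Longrightarrow> 1 - t \<noteq> 0 \<Longrightarrow> A = 2 * H * R + 2*(1-a)*(1-b)*(1-t) + (a+b-2*a*b) \<Longrightarrow>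
     R^2 = (1-t+t*a)*(1-t+t*b) \<Longrightarrow> G^2 = a*b \<Longrightarrow> H^2 = (1-a)*(1-b) \<Longrightarrow> (1/A) * (2*H*(Qd t/(2*R)) - 2*(1-a)*(1-b)) = - H / R"
  proof -
    fix R G H A :: real
    assume h: "R \<noteq> 0" "A \<noteq> 0" "t \<noteq> 0" "1 - t \<noteq> 0" "A = 2 * H * R + 2*(1-a)*(1-b)*(1-t) + (a+b-2*a*b)"
      "R^2 = (1-t+t*a)*(1-t+t*b)" "G^2 = a*b" "H^2 = (1-a)*(1-b)"
    then show "(1/A) * (2*H*(Qd t/(2*R)) - 2*(1-a)*(1-b)) = - H / R"
      apply (simp add: field_simps)
      by algebra
  qed
  have "(1/A4 a b t) * (2*h*(Qd t/(2*RR a b t)) - 2*(1-a)*(1-b)) = - h / RR a b t"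
    apply (rule key[where G=g and H=h])
    using A4_pos[OF t01] R_pos[OF t01] t R2[OF t01] g2 h2 by (auto simp: A4_def)
  then show ?thesis using d2 by simp
qed

lemma dFF: assumes t: "t \<in> {0<..<1}"
  shows "((\<lambda>t. FF a b t) has_real_derivative (1 - t + g*t - RR a b t)/(t*(1-t))) (at t)"
proof -
  have t01: "t \<in> {0..1}" using t by auto
  have d: "((\<lambda>t. FF a b t) has_real_derivative
     (1/t - 1/(t * RR a b t)) + ((2-a-b)/(2 * h)) * (h / RR a b t)
     - g * ((g - RR a b t)/((1-t) * RR a b t)) + ((a+b-2*a*b)/(2 * h)) * (- h / RR a b t)) (at t)"
    unfolding FF_def by (intro DERIV_add DERIV_diff DERIV_cmult dlnA1 dlnA2 dlnA3 dlnA4 t)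
  have key: "\<And>R G H. R \<noteq> 0 \<Longrightarrow> H \<noteq> 0 \<Longrightarrow> t \<noteq> 0 \<Longrightarrow> 1 - t \<noteq> 0 \<Longrightarrow>
     R^2 = (1-t+t*a)*(1-t+t*b) \<Longrightarrow> G^2 = a*b \<Longrightarrow>
     (1/t - 1/(t * R)) + ((2-a-b)/(2 * H)) * (H / R)
     - G * ((G - R)/((1-t) * R)) + ((a+b-2*a*b)/(2 * H)) * (- H / R) = (1 - t + G*t - R)/(t*(1-t))"
  proof -
    fix R G H :: real
    assume "R \<noteq> 0" "H \<noteq> 0" "t \<noteq> 0" "1 - t \<noteq> 0"
      "R^2 = (1-t+t*a)*(1-t+t*b)" "G^2 = a*b"
    then show "(1/t - 1/(t * R)) + ((2-a-b)/(2 * H)) * (H / R)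
     - G * ((G - R)/((1-t) * R)) + ((a+b-2*a*b)/(2 * H)) * (- H / R) = (1 - t + G*t - R)/(t*(1-t))"
      apply (simp add: field_simps)
      by algebra
  qed
  have "(1/t - 1/(t * RR a b t)) + ((2-a-b)/(2 * h)) * (h / RR a b t)
     - g * ((g - RR a b t)/((1-t) * RR a b t)) + ((a+b-2*a*b)/(2 * h)) * (- h / RR a b t)
     = (1 - t + g*t - RR a b t)/(t*(1-t))"
    apply (rule key)
    using R_pos[OF t01] t R2[OF t01] g2 h_pos by auto
  then show ?thesis using d by simp
qed

lemma cont_FF: "continuous_on {0..1} (FF a b)"
proof -
  have cR: "continuous_on {0..1} (RR a b)" unfolding RR_def by (intro continuous_intros)
  have c1: "continuous_on {0..1} (A1 a b)" unfolding A1_def by (intro continuous_intros cR)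
  have c2: "continuous_on {0..1} (A2 a b)" unfolding A2_def by (intro continuous_intros cR)
  have c3: "continuous_on {0..1} (A3 a b)" unfolding A3_def by (intro continuous_intros cR)
  have c4: "continuous_on {0..1} (A4 a b)" unfolding A4_def by (intro continuous_intros cR)
  have "\<forall>t\<in>{0..1}. A1 a b t \<noteq> 0" "\<forall>t\<in>{0..1}. A2 a b t \<noteq> 0"
       "\<forall>t\<in>{0..1}. A3 a b t \<noteq> 0" "\<forall>t\<in>{0..1}. A4 a b t \<noteq> 0"
    using A1_pos A2_pos A3_pos A4_pos by (metis less_irrefl)+
  then show ?thesis unfolding FF_def
    by (intro continuous_intros continuous_on_ln c1 c2 c3 c4) auto
qed

lemma FF_int: "((\<lambda>t. (1 - t + g*t - RR a b t)/(t*(1-t))) has_integral (FF a b 1 - FF a b 0)) {0..1}"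
  apply (rule fundamental_theorem_of_calculus_interior)
  using cont_FF dFF by (auto simp: has_real_derivative_iff_has_vector_derivative[symmetric])

lemma h_lt1: "h < 1"
proof -
  have "(1-a)*(1-b) < 1*1" using a0 ab b1 by (intro mult_strict_mono) auto
  then show ?thesis by simp
qed

lemma sp_pos: "0 < (1+g+h)/2"
proof -
  have "\<And>G H::real. 0 < G \<Longrightarrow> 0 < H \<Longrightarrow> 0 < (1+G+H)/2" by simp
  then show ?thesis using g_pos h_pos by blast
qed
lemma sm_pos: "0 < (1+g-h)/2"
proof -
  have "\<And>G H::real. 0 < G \<Longrightarrow> H < 1 \<Longrightarrow> 0 < (1+G-H)/2" by simp
  then show ?thesis using g_pos h_lt1 by blast
qed

lemma FF_diff: "FF a b 1 - FF a b 0 =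
   2*(((1+g+h)/2)*ln ((1+g+h)/2) + ((1+g-h)/2)*ln ((1+g-h)/2) - g*ln g)"
proof -
  obtain G where G: "g = G" by blast
  obtain H where H: "h = H" by blast
  have G2: "G^2 = a*b" and H2: "H^2 = (1-a)*(1-b)" and gp: "G > 0" and hp: "H > 0" and H1: "H < 1"
    using g2 h2 g_pos h_pos h_lt1 G H by auto
  define sp where "sp = (1+G+H)/2"
  define sm where "sm = (1+G-H)/2"
  have sp: "sp > 0" using gp hp unfolding sp_def by simp
  have sm: "sm > 0" using gp H1 unfolding sm_def by simp
  have R0: "RR a b 0 = 1" by (simp add: RR_def)
  have R1: "RR a b 1 = G" using G by (simp add: RR_def)
  have spsm: "4 * sp * sm = 2*G + a + b"
    unfolding sp_def sm_def using G2 H2 by (simp add: field_simps) algebra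
  have e1: "ln (A1 a b 1) - ln (A1 a b 0) = ln sp + ln sm"
  proof -
    have "A1 a b 1 = 4 * sp * sm" "A1 a b 0 = 4" using spsm by (simp_all add: A1_def R0 R1)
    then show ?thesis using sp sm by (simp add: ln_mult)
  qed
  have e3: "ln (A3 a b 1) - ln (A3 a b 0) = 2*ln G - ln sp - ln sm"
  proof -
    have "A3 a b 1 = 4*(G*G)" "A3 a b 0 = 4 * sp * sm" using spsm G2
      by (simp_all add: A3_def R0 R1 G power2_eq_square)
    then show ?thesis using sp sm gp by (simp add: ln_mult)
  qed
  have p20: "A2 a b 0 > 0" and p40: "A4 a b 0 > 0" using A2_pos A4_pos by auto
  have e2: "ln (A2 a b 1) - ln (A2 a b 0) = ln sp - ln sm"
  proof -
    have "A2 a b 1 * sm = A2 a b 0 * sp"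
      unfolding A2_def R0 R1 sp_def sm_def H using G2 H2 by (simp add: field_simps) algebra
    then have "A2 a b 1 = A2 a b 0 * sp / sm" using sm by (simp add: field_simps)
    then show ?thesis using sp sm p20 by (simp add: ln_mult ln_div)
  qed
  have e4: "ln (A4 a b 1) - ln (A4 a b 0) = ln sm - ln sp"
  proof -
    have "A4 a b 1 * sp = A4 a b 0 * sm"
      unfolding A4_def R0 R1 sp_def sm_def H using G2 H2 by (simp add: field_simps) algebra
    then have "A4 a b 1 = A4 a b 0 * sm / sp" using sp by (simp add: field_simps)
    then show ?thesis using sp sm p40 by (simp add: ln_mult ln_div)
  qed
  define c2 where "c2 = (2-a-b)/(2 * H)"
  define c4 where "c4 = (a+b-2*a*b)/(2 * H)"
  have c24: "c2 = c4 + H" unfolding c2_def c4_def using hp H2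
    by (simp add: field_simps) (simp add: algebra_simps power2_eq_square)
  have "FF a b 1 - FF a b 0 = (ln (A1 a b 1) - ln (A1 a b 0)) + c2*(ln (A2 a b 1) - ln (A2 a b 0))
        - G*(ln (A3 a b 1) - ln (A3 a b 0)) + c4*(ln (A4 a b 1) - ln (A4 a b 0))"
  proof -
    have FFe: "\<And>t. FF a b t = ln (A1 a b t) + c2 * ln (A2 a b t) - G * ln (A3 a b t) + c4 * ln (A4 a b t)"
      unfolding FF_def c2_def c4_def G H by simp
    show ?thesis unfolding FFe by (simp add: algebra_simps)
  qed
  also have "... = (1+G+H)*ln sp + (1+G-H)*ln sm - 2*G*ln G"
    unfolding e1 e2 e3 e4 c24 by (simp add: algebra_simps)
  also have "... = 2*(sp * ln sp + sm * ln sm - G*ln G)"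
  proof -
    have s2: "1+G+H = 2 * sp" "1+G-H = 2 * sm" by (simp_all add: sp_def sm_def)
    show ?thesis unfolding s2 by (simp add: algebra_simps)
  qed
  finally show ?thesis unfolding sp_def sm_def G H .
qed


lemma ln_int: assumes x: "x \<in> {a..b}"
  shows "((\<lambda>t. (x-1)/(1-t+t*x)) has_integral ln x) {0..1}"
proof -
  have x01: "0 < x" "x < 1" using x a0 b1 by auto
  have pos: "0 < 1-t+t*x" if "t \<in> {0..1}" for t using lin_pos[OF that x01] .
  have "((\<lambda>t. (x-1)/(1-t+t*x)) has_integral (ln (1-1+1*x) - ln (1-0+0*x))) {0..1}"
  proof (rule fundamental_theorem_of_calculus_interior)
    show "continuous_on {0..1} (\<lambda>t. ln (1-t+t*x))"
      using pos by (intro continuous_intros) (auto dest: pos simp: less_imp_neq[symmetric])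
    fix t :: real assume t: "t \<in> {0<..<1}"
    then have p: "0 < 1-t+t*x" using pos by auto
    have "((\<lambda>t. ln (1-t+t*x)) has_real_derivative (x-1)/(1-t+t*x)) (at t)"
      using p by (auto intro!: derivative_eq_intros simp: field_simps)
    then show "((\<lambda>t. ln (1-t+t*x)) has_vector_derivative (x-1)/(1-t+t*x)) (at t)"
      by (simp add: has_real_derivative_iff_has_vector_derivative[symmetric])
  qed simp
  then show ?thesis by simp
qed

lemma inner_int:
  fixes C :: real
  assumes t: "t \<in> {0<..<1}"
  shows "integral {a..b} (\<lambda>x. C * sqrt((x-a)*(b-x)) / (2*pi*x*(1-x)) * ((x-1)/(1-t+t*x)))
       = (C/2) * ((1 - t + sqrt(a*b)*t - RR a b t)/(t*(1-t)))"
proof -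
  define p where "p = -(1-t)/t"
  have t0: "0 < t" "t < 1" using t by auto
  have "(1-t)/t > 0" using t0 by simp
  moreover have "p = -((1-t)/t)" unfolding p_def by (rule minus_divide_left[symmetric])
  ultimately have p0: "p < 0" by linarith
  have pa: "p < a" using p0 a0 by simp
  have I0: "((\<lambda>x. sqrt((x-a)*(b-x))/(x-0)) has_integral pi*((a+b)/2 - 0 - sqrt((a-0)*(b-0)))) {a..b}"
    by (rule stieltjes) (use a0 ab in auto)
  have Ip: "((\<lambda>x. sqrt((x-a)*(b-x))/(x-p)) has_integral pi*((a+b)/2 - p - sqrt((a-p)*(b-p)))) {a..b}"
    by (rule stieltjes[OF pa ab])
  define K where "K = -C/(2*pi*(1-t))"
  have I: "((\<lambda>x. K * (sqrt((x-a)*(b-x))/(x-0) - sqrt((x-a)*(b-x))/(x-p))) has_integral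
      K * (pi*((a+b)/2 - 0 - sqrt((a-0)*(b-0))) - pi*((a+b)/2 - p - sqrt((a-p)*(b-p))))) {a..b}"
    by (intro has_integral_mult_right has_integral_diff I0 Ip)
  have eqf: "K * (sqrt((x-a)*(b-x))/(x-0) - sqrt((x-a)*(b-x))/(x-p)) =
      C * sqrt((x-a)*(b-x)) / (2*pi*x*(1-x)) * ((x-1)/(1-t+t*x))" if x: "x \<in> {a..b}" for x
  proof -
    have x01: "0 < x" "x < 1" using x a0 b1 by auto
    have q: "0 < 1-t+t*x" using lin_pos[of t x] x01 t0 by auto
    have xp: "x - p = (1-t+t*x)/t" unfolding p_def using t0 by (simp add: field_simps)
    have nz: "x \<noteq> 0" "1 - x \<noteq> 0" "1 - t \<noteq> 0" "t \<noteq> 0" "1-t+t*x \<noteq> 0" "pi \<noteq> 0"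
      using x01 t0 q by auto
    have "\<And>S. K * (S/(x-0) - S/(x-p)) = C * S / (2*pi*x*(1-x)) * ((x-1)/(1-t+t*x))"
      unfolding K_def xp using nz by (simp add: divide_simps) (simp add: algebra_simps)
    then show ?thesis .
  qed
  have sq: "sqrt((a-p)*(b-p)) = RR a b t / t"
  proof -
    have "(a-p)*(b-p) = ((1-t+t*a)*(1-t+t*b))/t^2" unfolding p_def using t0
      by (simp add: field_simps power2_eq_square)
    then show ?thesis using t0 by (simp add: RR_def real_sqrt_divide)
  qed
  have val: "K * (pi*((a+b)/2 - 0 - sqrt((a-0)*(b-0))) - pi*((a+b)/2 - p - sqrt((a-p)*(b-p))))
      = (C/2) * ((1 - t + sqrt(a*b)*t - RR a b t)/(t*(1-t)))"
    unfolding sq unfolding K_def p_def using t0 by (simp add: field_simps)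
  have "((\<lambda>x. C * sqrt((x-a)*(b-x)) / (2*pi*x*(1-x)) * ((x-1)/(1-t+t*x))) has_integral
      (C/2) * ((1 - t + sqrt(a*b)*t - RR a b t)/(t*(1-t)))) {a..b}"
    apply (rule has_integral_spike_finite[OF finite.emptyI _ I[unfolded val]])
    using eqf by (metis Diff_empty)
  then show ?thesis by (rule integral_unique)
qed

lemma main_int:
  fixes C :: real
  shows "integral {a..b} (\<lambda>x. C * sqrt((x-a)*(b-x)) / (2*pi*x*(1-x)) * ln x) = (C/2) * (FF a b 1 - FF a b 0)"
proof -
  define f where "f x t = C * sqrt((x-a)*(b-x)) / (2*pi*x*(1-x)) * ((x-1)/(1-t+t*x))" for x t :: real
  have step1: "integral {a..b} (\<lambda>x. C * sqrt((x-a)*(b-x)) / (2*pi*x*(1-x)) * ln x)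
      = integral {a..b} (\<lambda>x. integral {0..1} (f x))"
  proof (rule integral_cong)
    fix x assume x: "x \<in> {a..b}"
    have "(f x has_integral C * sqrt((x-a)*(b-x)) / (2*pi*x*(1-x)) * ln x) {0..1}"
      unfolding f_def by (rule has_integral_mult_right[OF ln_int[OF x]])
    then show "C * sqrt((x-a)*(b-x)) / (2*pi*x*(1-x)) * ln x = integral {0..1} (f x)"
      by (simp add: integral_unique)
  qed
  have cont: "continuous_on (cbox (a,0) (b,1)) (\<lambda>(x,t). f x t)"
  proof -
    have nz: "\<forall>z\<in>cbox (a,0) (b,1). 2*pi*fst z*(1-fst z) \<noteq> 0 \<and> 1 - snd z + snd z * fst z \<noteq> 0"
    proof
      fix z :: "real \<times> real" assume "z \<in> cbox (a,0) (b,1)"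
      then have z: "fst z \<in> {a..b}" "snd z \<in> {0..1}" by (auto simp: cbox_Pair_eq)
      then have "0 < fst z" "fst z < 1" using a0 b1 by auto
      then show "2*pi*fst z*(1-fst z) \<noteq> 0 \<and> 1 - snd z + snd z * fst z \<noteq> 0"
        using lin_pos[OF z(2), of "fst z"] by auto
    qed
    have "(\<lambda>(x,t). f x t) = (\<lambda>z. f (fst z) (snd z))" by (simp add: fun_eq_iff split_beta)
    moreover have "continuous_on (cbox (a,0) (b,1)) (\<lambda>z. f (fst z) (snd z))"
      unfolding f_def using nz by (intro continuous_intros) auto
    ultimately show ?thesis by simp
  qed
  have step2: "integral {a..b} (\<lambda>x. integral {0..1} (f x)) = integral {0..1} (\<lambda>t. integral {a..b} (\<lambda>x. f x t))"
    using integral_swap_continuous[OF cont] by simp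
  have step3: "((\<lambda>t. integral {a..b} (\<lambda>x. f x t)) has_integral (C/2) * (FF a b 1 - FF a b 0)) {0..1}"
  proof (rule has_integral_spike_finite[where S="{0,1}"])
    show "((\<lambda>t. (C/2) * ((1 - t + sqrt(a*b)*t - RR a b t)/(t*(1-t)))) has_integral (C/2) * (FF a b 1 - FF a b 0)) {0..1}"
      by (rule has_integral_mult_right[OF FF_int])
    fix t :: real assume "t \<in> {0..1} - {0,1}"
    then have t: "t \<in> {0<..<1}" by auto
    show "integral {a..b} (\<lambda>x. f x t) = (C/2) * ((1 - t + sqrt(a*b)*t - RR a b t)/(t*(1-t)))"
      unfolding f_def by (rule inner_int[OF t])
  qed simp
  show ?thesis unfolding step1 step2 using step3 by (rule integral_unique)
qed

end

lemma gh_lt1: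
  fixes a b :: real
  assumes a0: "0 < a" and ab: "a < b" and b1: "b < 1"
  shows "sqrt(a*b) + sqrt((1-a)*(1-b)) < 1"
proof -
  obtain G where G: "sqrt(a*b) = G" by blast
  obtain H where H: "sqrt((1-a)*(1-b)) = H" by blast
  have G2: "G^2 = a*b" and H2: "H^2 = (1-a)*(1-b)" and gp: "G \<ge> 0" and hp: "H \<ge> 0"
    using G H a0 ab b1 by (auto simp flip: G H)
  define u where "u = a*(1-b)"
  define v where "v = b*(1-a)"
  have uv: "u > 0" "v > 0" unfolding u_def v_def using a0 ab b1 by auto
  have "(G*H)^2 = u * v" unfolding u_def v_def power_mult_distrib G2 H2 by (simp add: algebra_simps)
  moreover have "(u-v)^2 > 0" unfolding u_def v_def using ab by (simp add: algebra_simps)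
  ultimately have "(2*G*H)^2 < (u+v)^2" by (simp add: power2_eq_square algebra_simps)
  then have "2*G*H < u+v" using uv gp hp by (smt (verit) power_mono)
  then have "(G+H)^2 < 1^2" unfolding power2_sum G2 H2 u_def v_def by (simp add: algebra_simps)
  then have "G + H < 1" using gp hp by (smt (verit) power_mono)
  then show ?thesis using G H by simp
qed

theorem proposition4p2:
  fixes am ap :: real
  assumes "0 < am" "am < ap" "ap < 1"
  shows "(\<integral>x. ln x \<partial>mckay am ap) =
    (let sp = sigma_plus am ap; sm = sigma_minus am ap in
      (sp * ln sp + sm * ln sm - (sp + sm - 1) * ln (sp + sm - 1)) / (1 - sp))"
proof -
  note a0 = assms(1) and ab = assms(2) and b1 = assms(3)
  define C where "C = mckay_const am ap"
  define w where "w x = C * sqrt((x-am)*(ap-x)) / (2*pi*x*(1-x))" for x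
  have ghl: "sqrt(am*ap) + sqrt((1-am)*(1-ap)) < 1" by (rule gh_lt1[OF a0 ab b1])
  have Cpos: "C > 0" unfolding C_def mckay_const_def using ghl by simp
  have dens: "mckay_density am ap x = w x * indicator {am..ap} x" for x
    by (simp add: mckay_density_def w_def C_def)
  have nonneg: "0 \<le> mckay_density am ap x" for x
  proof (cases "x \<in> {am..ap}")
    case True
    then have "0 < x" "x < 1" using a0 b1 by auto
    then have "0 \<le> w x" unfolding w_def using Cpos True by (intro divide_nonneg_pos mult_nonneg_nonneg) auto
    then show ?thesis by (simp add: dens)
  qed (simp add: dens)
  have meas: "(\<lambda>x. mckay_density am ap x) \<in> borel_measurable lborel"
    unfolding mckay_density_def by measurable
  have cont: "continuous_on {am..ap} (\<lambda>x. w x * ln x)"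
  proof -
    have "\<forall>x\<in>{am..ap}. 2*pi*x*(1-x) \<noteq> 0 \<and> x \<noteq> 0" using a0 b1 by auto
    then show ?thesis unfolding w_def by (intro continuous_intros) auto
  qed
  have int: "integrable lborel (\<lambda>x. indicator {am..ap} x *\<^sub>R (w x * ln x))"
    by (rule borel_integrable_compact[OF compact_Icc cont])
  have "(\<integral>x. ln x \<partial>mckay am ap) = integral\<^sup>L lborel (\<lambda>x. mckay_density am ap x *\<^sub>R ln x)"
    unfolding mckay_def by (rule integral_density) (use meas nonneg in auto)
  also have "(\<lambda>x. mckay_density am ap x *\<^sub>R ln x) = (\<lambda>x. indicator {am..ap} x *\<^sub>R (w x * ln x))"
    by (auto simp: dens fun_eq_iff)
  also have "integral\<^sup>L lborel (\<lambda>x. indicator {am..ap} x *\<^sub>R (w x * ln x))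
      = integral UNIV (\<lambda>x. indicator {am..ap} x *\<^sub>R (w x * ln x))"
    using has_integral_integral_lborel[OF int] by (simp add: integral_unique)
  also have "... = integral {am..ap} (\<lambda>x. w x * ln x)"
  proof -
    have "(\<lambda>x. indicator {am..ap} x *\<^sub>R (w x * ln x)) = (\<lambda>x. if x \<in> {am..ap} then w x * ln x else 0)"
      by (auto simp: fun_eq_iff indicator_def)
    then show ?thesis using Henstock_Kurzweil_Integration.integral_restrict_UNIV[of "{am..ap}" "\<lambda>x. w x * ln x"]
      by simp
  qed
  also have "... = (C/2) * (FF am ap 1 - FF am ap 0)"
    unfolding w_def by (rule main_int[OF a0 ab b1])
  also have "... = C * (((1+sqrt(am*ap)+sqrt((1-am)*(1-ap)))/2)*ln ((1+sqrt(am*ap)+sqrt((1-am)*(1-ap)))/2)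
      + ((1+sqrt(am*ap)-sqrt((1-am)*(1-ap)))/2)*ln ((1+sqrt(am*ap)-sqrt((1-am)*(1-ap)))/2)
      - sqrt(am*ap)*ln (sqrt(am*ap)))"
    unfolding FF_diff[OF a0 ab b1] by simp
  also have "... = (let sp = sigma_plus am ap; sm = sigma_minus am ap in
      (sp * ln sp + sm * ln sm - (sp + sm - 1) * ln (sp + sm - 1)) / (1 - sp))"
  proof -
    obtain G where G: "sqrt(am*ap) = G" by blast
    obtain H where H: "sqrt((1-am)*(1-ap)) = H" by blast
    have gh: "G + H < 1" using ghl G H by simp
    have e: "(1 + G + H) / 2 + (1 + G - H) / 2 - 1 = G" by (simp add: field_simps)
    show ?thesis unfolding sigma_plus_def sigma_minus_def Let_def C_def mckay_const_def G H e
      using gh by (simp add: field_simps)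
  qed
  finally show ?thesis .
qed

end
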